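(* Let $p\neq 2$ be a prime and let $\mathbb{Z}(p)$ be the field of integers modulo $p$. Let $a_2,a_3,b_2,b_3$ be nonzero elements of $\mathbb{Z}(p)$. Let $\xi_1,\xi_2,\xi_3,\xi_4$ be independent $\mathbb{Z}(p)$-valued random variables with nowhere-vanishing characteristic functions, and put $L_1=\xi_1+a_2\xi_2+a_3\xi_3$, $L_2=b_2\xi_2+b_3\xi_3+\xi_4$. Let $\eta_1,\dots,\eta_4$ be any independent $\mathbb{Z}(p)$-valued random variables with nowhere-vanishing characteristic functions such that $(\eta_1+a_2\eta_2+a_3\eta_3,\ b_2\eta_2+b_3\eta_3+\eta_4)$ has the same distribution as $(L_1,L_2)$. Then: 1. If $a_2b_3\neq a_3b_2$, there exist $\alpha_1,\dots,\alpha_4\in\mathbb{Z}(p)$ such that $\eta_j$ has the same distribution as $\xi_j+\alpha_j$ for $j=1,2,3,4$. 2. If $a_2b_3=a_3b_2$, there exist $\alpha_1,\alpha_4\in\mathbb{Z}(p)$ such that $\eta_j$ has the same distribution as $\xi_j+\alpha_j$ for $j=1,4$.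
   Context: The character group of the additive group of $\mathbb{Z}(p)$ is isomorphic to $\mathbb{Z}(p)$; write $(x,y)$ for the value of the character $y$ at $x$, with $(ax,y)=(x,ay)$. The characteristic function of a $\mathbb{Z}(p)$-valued random variable $\xi$ is $y\mapsto\mathbf{E}[(\xi,y)]$ on the character group; "nowhere-vanishing" means it is nonzero at every $y$. *)

theory Defs
  imports "HOL-Probability.Probability" "Berlekamp_Zassenhaus.Finite_Field"
begin

text \<open>The field Z(p) is the type 'p mod_ring with 'p of class prime_card, so p = CARD('p).
  The character pairing (x,y) = exp(2 pi i x y / p).\<close>

definition zp_pairing :: "'p::finite mod_ring \<Rightarrow> 'p mod_ring \<Rightarrow> complex" where
  "zp_pairing x y = cis (2 * pi * real_of_int (to_int_mod_ring (x * y)) / real CARD('p))"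

definition zp_charfun :: "'a measure \<Rightarrow> ('a \<Rightarrow> 'p::finite mod_ring) \<Rightarrow> 'p mod_ring \<Rightarrow> complex" where
  "zp_charfun M X y = (LINT \<omega>|M. zp_pairing (X \<omega>) y)"

end

theory Submission
  imports Defs
begin

definition zpE :: "'p::prime_card mod_ring \<Rightarrow> complex" where
  "zpE z = zp_pairing z 1"

lemma cis_int_mod:
  fixes n :: int and p :: nat assumes "p > 0"
  shows "cis (2 * pi * real_of_int (n mod int p) / real p) = cis (2 * pi * real_of_int n / real p)"
proof -
  have n: "n = n mod int p + int p * (n div int p)" by simp
  have e: "real_of_int n = real_of_int (n mod int p) + real p * real_of_int (n div int p)"
    by (metis n of_int_add of_int_mult of_int_of_nat_eq)
  have "2 * pi * real_of_int n / real p = 2 * pi * real_of_int (n mod int p) / real p + 2 * pi * real_of_int (n div int p)"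
    using assms by (subst e) (simp add: field_simps)
  then have "cis (2 * pi * real_of_int n / real p) = cis (2 * pi * real_of_int (n mod int p) / real p) * cis (2 * pi * real_of_int (n div int p))"
    by (metis cis_mult)
  also have "cis (2 * pi * real_of_int (n div int p)) = 1" by (rule cis_multiple_2pi) simp
  finally show ?thesis by simp
qed

lemma zp_pairing_E: "zp_pairing x y = zpE (x * y)"
  by (simp add: zpE_def zp_pairing_def)

lemma zpE_def2: "zpE (z :: 'p::prime_card mod_ring) = cis (2 * pi * real_of_int (to_int_mod_ring z) / real CARD('p))"
  by (simp add: zpE_def zp_pairing_def)

lemma zpE_add: "zpE (z + w :: 'p::prime_card mod_ring) = zpE z * zpE w"
proof -
  have "zpE (z + w) = cis (2 * pi * real_of_int ((to_int_mod_ring z + to_int_mod_ring w) mod int CARD('p)) / real CARD('p))"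
    by (simp add: zpE_def2 to_int_mod_ring_add)
  also have "\<dots> = cis (2 * pi * real_of_int (to_int_mod_ring z + to_int_mod_ring w) / real CARD('p))"
    by (rule cis_int_mod) simp
  also have "\<dots> = zpE z * zpE w" by (simp add: zpE_def2 cis_mult add_divide_distrib distrib_left)
  finally show ?thesis .
qed

lemma zpE_0[simp]: "zpE 0 = 1" by (simp add: zpE_def2)

lemma norm_zpE[simp]: "norm (zpE z) = 1" by (simp add: zpE_def2)

lemma zpE_nz[simp]: "zpE z \<noteq> 0" by (metis norm_zero norm_zpE zero_neq_one)

lemma zpE_uminus: "zpE (- z) = cnj (zpE z)"
proof -
  have "zpE (- z) * zpE z = 1" by (simp flip: zpE_add)
  moreover have "cnj (zpE z) * zpE z = 1"
    using norm_zpE[of z] by (metis complex_norm_square mult.commute of_real_1 power_one)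
  ultimately show ?thesis using zpE_nz[of z] by (metis mult_right_cancel)
qed

lemma zpE_of_nat: "zpE (of_nat n :: 'p::prime_card mod_ring) = zpE (1 :: 'p mod_ring) ^ n"
  by (induction n) (simp_all add: zpE_add)

lemma zpE_1: "zpE (1 :: 'p::prime_card mod_ring) = cis (2 * pi / real CARD('p))"
proof -
  have "to_int_mod_ring (1 :: 'p mod_ring) = 1" by transfer simp
  then show ?thesis by (simp add: zpE_def2)
qed

lemma zpE_ne_1: assumes "z \<noteq> 0" shows "zpE (z :: 'p::prime_card mod_ring) \<noteq> 1"
proof
  assume a: "zpE z = 1"
  let ?p = "CARD('p)"
  have p0: "?p > 0" by simp
  define t where "t = nat (to_int_mod_ring z)"
  have "to_int_mod_ring z \<in> {0..<int ?p}" using range_to_int_mod_ring[where 'a='p] by blast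
  then have t: "t < ?p" "int t = to_int_mod_ring z" unfolding t_def by auto
  have "cis (2 * pi * real t / real ?p) = cis (2 * pi * real 0 / real ?p)"
    using a t(1) by (simp add: zpE_def2 flip: t(2))
  then have "t = 0" using Complex.bij_betw_roots_unity[OF p0] t(1) unfolding bij_betw_def inj_on_def
    by (metis lessThan_iff p0)
  then have "z = of_int_mod_ring (to_int_mod_ring z)" by simp
  also have "\<dots> = 0" using t \<open>t = 0\<close> by simp
  finally show False using assms by simp
qed

lemma sum_zpE: "(\<Sum>y\<in>UNIV. zpE (w * y :: 'p::prime_card mod_ring)) = (if w = 0 then of_nat CARD('p) else 0)"
proof (cases "w = 0")
  case True then show ?thesis by simp
next
  case False
  let ?S = "\<Sum>y\<in>UNIV. zpE (w * y)"
  have "(\<Sum>y\<in>UNIV. zpE (w * (y + 1))) = ?S"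
    by (rule sum.reindex_bij_witness[where i="\<lambda>y. y - 1" and j="\<lambda>y. y + 1"]) auto
  then have "zpE w * ?S = ?S" by (simp add: distrib_left zpE_add sum_distrib_left mult.commute)
  then have "(zpE w - 1) * ?S = 0" by (simp add: algebra_simps)
  then show ?thesis using zpE_ne_1[OF False] False by simp
qed
lemma hom_to_char:
  fixes \<phi> :: "'p::prime_card mod_ring \<Rightarrow> complex"
  assumes hom: "\<And>x y. \<phi> (x + y) = \<phi> x * \<phi> y" and nz: "\<And>x. \<phi> x \<noteq> 0"
  shows "\<exists>\<alpha>. \<forall>y. \<phi> y = zpE (\<alpha> * y)"
proof -
  let ?p = "CARD('p)"
  have p0: "?p > 0" by simp
  have "\<phi> 0 * \<phi> 0 = \<phi> 0 * 1" using hom[of 0 0] by simp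
  then have phi0: "\<phi> 0 = 1" using nz[of 0] by (metis mult_left_cancel)
  have pn: "\<phi> (of_nat n) = \<phi> 1 ^ n" for n
    by (induction n) (simp_all add: phi0 hom)
  have "\<phi> 1 ^ ?p = 1" using pn[of ?p] phi0 by simp
  then obtain k where k: "k < ?p" "\<phi> 1 = cis (2 * pi * real k / real ?p)"
    using Complex.bij_betw_roots_unity[OF p0] unfolding bij_betw_def by force
  have e1: "zpE (1::'p mod_ring) ^ k = \<phi> 1"
    unfolding zpE_1 k(2) Complex.DeMoivre by (rule arg_cong[where f=cis]) (simp add: field_simps)
  show ?thesis
  proof (intro exI allI)
    fix y :: "'p mod_ring"
    obtain n where y: "y = of_nat n" using surj_of_nat_mod_ring[of y] by blast
    have "\<phi> y = (zpE (1::'p mod_ring) ^ k) ^ n" by (simp add: y pn e1)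
    also have "\<dots> = zpE (of_nat (k * n) :: 'p mod_ring)" by (subst zpE_of_nat) (simp add: power_mult)
    finally show "\<phi> y = zpE (of_nat k * y)" by (simp add: y)
  qed
qed

lemma real_root_odd:
  fixes c :: complex
  assumes "cnj c = c" "c ^ n = 1" "odd n"
  shows "c = 1"
proof -
  have "Im c = 0" using assms(1) by (simp add: complex_eq_iff)
  then have cr: "c = of_real (Re c)" by (simp add: complex_eq_iff)
  then have r: "Re c ^ n = 1" using assms(2) by (metis of_real_eq_1_iff of_real_power)
  then have "\<bar>Re c\<bar> ^ n = 1" by (metis abs_one power_abs)
  moreover obtain m where "n = Suc m" using assms(3) odd_pos gr0_implies_Suc by blast
  ultimately have "\<bar>Re c\<bar> ^ Suc m = 1 ^ Suc m" by simp
  then have "\<bar>Re c\<bar> = 1" by (rule power_inject_base) auto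
  then have "Re c = 1 \<or> Re c = -1" by auto
  moreover have "Re c \<noteq> -1" using r assms(3) by auto
  ultimately show ?thesis using cr by simp
qed

lemma quad_hom:
  fixes \<phi> :: "'p::prime_card mod_ring \<Rightarrow> complex"
  assumes p2: "CARD('p) \<noteq> 2"
    and phi0: "\<phi> 0 = 1" and nz: "\<And>x. \<phi> x \<noteq> 0" and sym: "\<And>x. \<phi> (- x) = cnj (\<phi> x)"
    and Q: "\<And>s x. \<phi> (s + x + 1) * \<phi> s * \<phi> x * \<phi> 1 = \<phi> (s + x) * \<phi> (s + 1) * \<phi> (x + 1)"
  shows "\<phi> (x + y) = \<phi> x * \<phi> y"
proof -
  define r where "r s = \<phi> (s + 1) / \<phi> s" for s
  define ch where "ch x = \<phi> (x + 1) / (\<phi> x * \<phi> 1)" for x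
  have r0: "r 0 = \<phi> 1" by (simp add: r_def phi0)
  have rnz: "r s \<noteq> 0" for s using nz by (simp add: r_def)
  have rs: "r (s + x) = r s * ch x" for s x
  proof -
    have "\<phi> (s + x + 1) = \<phi> (s + x) * \<phi> (s + 1) * \<phi> (x + 1) / (\<phi> s * \<phi> x * \<phi> 1)"
      using Q[of s x] nz by (simp add: field_simps)
    then show ?thesis using nz by (simp add: r_def ch_def field_simps)
  qed
  have chi_r: "ch x = r x / \<phi> 1" for x using rs[of 0 x] r0 nz by (simp add: field_simps)
  have chi_mult: "ch (x + y) = ch x * ch y" for x y
  proof -
    have "ch (x + y) = r (x + y) / \<phi> 1" by (rule chi_r)
    also have "\<dots> = r x * ch y / \<phi> 1" by (simp only: rs)
    also have "\<dots> = ch x * ch y" by (simp add: chi_r)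
    finally show ?thesis .
  qed
  have chi0: "ch 0 = 1" using chi_r[of 0] r0 nz by simp
  have chinz: "ch x \<noteq> 0" for x using chi_r rnz nz by simp
  have rsym: "r (- s - 1) * cnj (r s) = 1" for s
  proof -
    have "r (- s - 1) = \<phi> (- s) / \<phi> (- (s + 1))" by (simp add: r_def)
    also have "\<dots> = cnj (\<phi> s) / cnj (\<phi> (s + 1))" by (simp only: sym)
    finally show ?thesis using nz by (simp add: r_def field_simps)
  qed
  have rr: "r s = \<phi> 1 * ch s" for s using chi_r nz by (simp add: field_simps)
  have c1: "\<phi> 1 * ch (-1) * cnj (\<phi> 1) = 1" using rsym[of 0] rr[of 0] rr[of "-1"] chi0 by simp
  have chi_real: "cnj (ch s) = ch s" for s
  proof -
    have "\<phi> 1 * ch (- s - 1) * cnj (\<phi> 1) * cnj (ch s) = 1" using rsym[of s] rr by (simp add: mult_ac)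
    moreover have "ch (- s - 1) = ch (- s) * ch (-1)" using chi_mult[of "-s" "-1"] by simp
    ultimately have "(\<phi> 1 * ch (-1) * cnj (\<phi> 1)) * (ch (- s) * cnj (ch s)) = 1" by (simp add: mult_ac)
    then have a: "ch (- s) * cnj (ch s) = 1" using c1 by simp
    have b: "ch (- s) * ch s = 1" using chi_mult[of "-s" s] chi0 by simp
    from a b chinz[of "-s"] show ?thesis by (metis mult_left_cancel)
  qed
  have chipow: "ch s ^ n = ch (of_nat n * s)" for s n
    by (induction n) (simp_all add: chi0 chi_mult distrib_right)
  have chi1: "ch s = 1" for s
  proof (rule real_root_odd)
    show "cnj (ch s) = ch s" by (rule chi_real)
    show "ch s ^ CARD('p) = 1" using chipow[of s "CARD('p)"] chi0 by simp
    have "CARD('p) > 2" using p2 prime_ge_2_nat[OF prime_card[where 'a='p]] by linarith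
    then show "odd (CARD('p))" using prime_card[where 'a='p] by (metis prime_odd_nat)
  qed
  have step: "\<phi> (s + 1) = \<phi> s * \<phi> 1" for s using rr[of s] chi1[of s] nz[of s] by (simp add: r_def field_simps)
  have ind: "\<phi> (of_nat n + y) = \<phi> 1 ^ n * \<phi> y" for n y
  proof (induction n)
    case 0 then show ?case by simp
  next
    case (Suc n)
    have "\<phi> (of_nat (Suc n) + y) = \<phi> ((of_nat n + y) + 1)" by (simp add: algebra_simps)
    also have "\<dots> = \<phi> (of_nat n + y) * \<phi> 1" by (rule step)
    also have "\<dots> = \<phi> 1 ^ Suc n * \<phi> y" using Suc.IH by simp
    finally show ?case .
  qed
  obtain n where x: "x = of_nat n" using surj_of_nat_mod_ring[of x] by blast
  show ?thesis using ind[of n y] ind[of n 0] phi0 x by simp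
qed

lemma flat_hom:
  fixes H :: "'p::prime_card mod_ring \<Rightarrow> complex"
  assumes "H 0 = 1" "\<And>s x y. H (s + x + y) * H s = H (s + x) * H (s + y)"
  shows "H (x + y) = H x * H y"
  using assms(2)[of 0 x y] assms(1) by simp
lemma fin_integrable:
  fixes F :: "'c::finite \<Rightarrow> complex"
  assumes M: "prob_space M" and X: "X \<in> M \<rightarrow>\<^sub>M count_space UNIV"
  shows "integrable M (\<lambda>\<omega>. F (X \<omega>))"
proof -
  interpret prob_space M by (rule M)
  show ?thesis
  proof (rule integrable_const_bound[where B="\<Sum>x\<in>UNIV. norm (F x)"])
    show "AE x in M. norm (F (X x)) \<le> (\<Sum>x\<in>UNIV. norm (F x))"
      by (intro AE_I2 member_le_sum) auto
    show "(\<lambda>\<omega>. F (X \<omega>)) \<in> borel_measurable M"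
      by (rule measurable_compose[OF X]) (simp add: measurable_count_space_eq1)
  qed
qed

lemma cf_0: fixes X :: "'a \<Rightarrow> 'p::prime_card mod_ring"
  assumes M: "prob_space M" shows "zp_charfun M X 0 = 1"
proof -
  interpret prob_space M by (rule M)
  show ?thesis by (simp add: zp_charfun_def zp_pairing_E prob_space)
qed

lemma cf_uminus: fixes X :: "'a \<Rightarrow> 'p::prime_card mod_ring"
  shows "zp_charfun M X (- y) = cnj (zp_charfun M X y)"
  by (simp add: zp_charfun_def zp_pairing_E zpE_uminus)

lemma cf_shift: fixes X :: "'a \<Rightarrow> 'p::prime_card mod_ring"
  shows "zp_charfun M (\<lambda>\<omega>. X \<omega> + a) y = zpE (a * y) * zp_charfun M X y"
  unfolding zp_charfun_def zp_pairing_E distrib_right zpE_add by (simp add: mult.commute)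

lemma cf_inversion:
  fixes X :: "'a \<Rightarrow> 'p::prime_card mod_ring"
  assumes M: "prob_space M" and X: "X \<in> M \<rightarrow>\<^sub>M count_space UNIV"
  shows "complex_of_real (measure M (X -` {z} \<inter> space M))
       = (\<Sum>y\<in>UNIV. zp_charfun M X y * zpE (- (z * y))) / of_nat CARD('p)"
proof -
  interpret prob_space M by (rule M)
  have int: "integrable M (\<lambda>\<omega>. zpE (X \<omega> * y) * zpE (- (z * y)))" for y
    using fin_integrable[OF M X, of "\<lambda>x. zpE (x * y) * zpE (- (z * y))"] .
  have "(\<Sum>y\<in>UNIV. zp_charfun M X y * zpE (- (z * y)))
      = (\<Sum>y\<in>UNIV. LINT \<omega>|M. zpE (X \<omega> * y) * zpE (- (z * y)))"
    by (simp add: zp_charfun_def zp_pairing_E)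
  also have "\<dots> = (LINT \<omega>|M. (\<Sum>y\<in>UNIV. zpE (X \<omega> * y) * zpE (- (z * y))))"
    by (rule Bochner_Integration.integral_sum[where I=UNIV and f="\<lambda>y \<omega>. zpE (X \<omega> * y) * zpE (- (z * y))", symmetric]) (rule int)
  also have "\<dots> = (LINT \<omega>|M. complex_of_real (real CARD('p) * indicator (X -` {z} \<inter> space M) \<omega>))"
  proof (rule Bochner_Integration.integral_cong[OF refl])
    fix \<omega> assume \<omega>: "\<omega> \<in> space M"
    have "(\<Sum>y\<in>UNIV. zpE (X \<omega> * y) * zpE (- (z * y))) = (\<Sum>y\<in>UNIV. zpE ((X \<omega> - z) * y))"
      by (simp add: zpE_add[symmetric] algebra_simps)
    also have "\<dots> = (if X \<omega> - z = 0 then of_nat CARD('p) else 0)" by (rule sum_zpE)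
    finally show "(\<Sum>y\<in>UNIV. zpE (X \<omega> * y) * zpE (- (z * y))) =
        complex_of_real (real CARD('p) * indicator (X -` {z} \<inter> space M) \<omega>)"
      using \<omega> by (simp add: indicator_def)
  qed
  also have "\<dots> = of_nat CARD('p) * complex_of_real (measure M (X -` {z} \<inter> space M))"
    by simp
  finally show ?thesis by simp
qed

lemma distr_eq_cf:
  fixes X :: "'a \<Rightarrow> 'p::prime_card mod_ring" and Y :: "'b \<Rightarrow> 'p mod_ring"
  assumes M: "prob_space M" and X: "X \<in> M \<rightarrow>\<^sub>M count_space UNIV"
    and N: "prob_space N" and Y: "Y \<in> N \<rightarrow>\<^sub>M count_space UNIV"
    and eq: "\<And>y. zp_charfun N Y y = zp_charfun M X y"
  shows "distr N (count_space UNIV) Y = distr M (count_space UNIV) X"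
proof (rule measure_eqI_countable[where A=UNIV])
  fix a :: "'p mod_ring"
  interpret m: prob_space M by (rule M)
  interpret n: prob_space N by (rule N)
  have "complex_of_real (measure N (Y -` {a} \<inter> space N)) = complex_of_real (measure M (X -` {a} \<inter> space M))"
    using cf_inversion[OF M X, of a] cf_inversion[OF N Y, of a] eq by simp
  then have "measure N (Y -` {a} \<inter> space N) = measure M (X -` {a} \<inter> space M)" by simp
  then show "emeasure (distr N (count_space UNIV) Y) {a} = emeasure (distr M (count_space UNIV) X) {a}"
    using X Y by (simp add: emeasure_distr m.emeasure_eq_measure n.emeasure_eq_measure)
qed auto

lemma meas_pair:
  fixes f :: "'a \<Rightarrow> 'c::finite" and g :: "'a \<Rightarrow> 'd::finite"
  assumes "f \<in> M \<rightarrow>\<^sub>M count_space UNIV" "g \<in> M \<rightarrow>\<^sub>M count_space UNIV"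
  shows "(\<lambda>\<omega>. (f \<omega>, g \<omega>)) \<in> M \<rightarrow>\<^sub>M count_space UNIV"
proof -
  have "count_space (UNIV :: 'c set) \<Otimes>\<^sub>M count_space (UNIV :: 'd set) = count_space (UNIV \<times> UNIV)"
    by (rule pair_measure_countable) auto
  then show ?thesis using measurable_Pair[OF assms] by simp
qed

lemma meas_fun:
  fixes f :: "'a \<Rightarrow> 'c::finite"
  assumes "f \<in> M \<rightarrow>\<^sub>M count_space UNIV"
  shows "(\<lambda>\<omega>. G (f \<omega>)) \<in> M \<rightarrow>\<^sub>M count_space UNIV"
  by (rule measurable_compose[OF assms]) simp
lemma four_point:
  fixes h1 h4 :: "'p::prime_card mod_ring \<Rightarrow> complex"
  assumes E: "\<And>u v. h1 u * F u v * h4 v = 1" and nz1: "\<And>u. h1 u \<noteq> 0" and nz4: "\<And>v. h4 v \<noteq> 0"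
  shows "F (u + k) (v + m) * F u v = F (u + k) v * F u (v + m)"
proof -
  define C where "C = h1 (u + k) * h1 u * h4 v * h4 (v + m)"
  have C: "C \<noteq> 0" using nz1 nz4 by (simp add: C_def)
  have "C * (F (u + k) (v + m) * F u v) = (h1 (u + k) * F (u + k) (v + m) * h4 (v + m)) * (h1 u * F u v * h4 v)"
    by (simp add: C_def mult_ac)
  also have "\<dots> = 1" by (simp add: E)
  also have "1 = (h1 (u + k) * F (u + k) v * h4 v) * (h1 u * F u (v + m) * h4 (v + m))" by (simp add: E)
  also have "\<dots> = C * (F (u + k) v * F u (v + m))" by (simp add: C_def mult_ac)
  finally show ?thesis using C by simp
qed

lemma lin_split:
  fixes a b u v k m :: "'a::comm_ring"
  shows "a * (u + k) + b * (v + m) = (a * u + b * v) + (a * k + b * m)"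
    "a * (u + k) + b * v = (a * u + b * v) + a * k"
    "a * u + b * (v + m) = (a * u + b * v) + b * m"
  by (simp_all add: algebra_simps)

lemma case1_h2:
  fixes hA hB hC hD :: "'p::prime_card mod_ring \<Rightarrow> complex"
  assumes E: "\<And>u v. hA u * hB (aB * u + bB * v) * hC (aC * u + bC * v) * hD v = 1"
    and nz1: "\<And>u. hA u \<noteq> 0" and nz3: "\<And>u. hC u \<noteq> 0" and nz4: "\<And>v. hD v \<noteq> 0"
    and aB: "aB \<noteq> 0" and bB: "bB \<noteq> 0" and D: "aB * bC \<noteq> aC * bB"
  shows "hB (s + x + y) * hB s * hB x * hB y = hB (s + x) * hB (s + y) * hB (x + y) * hB 0"
proof -
  define F where "F u v = hB (aB * u + bB * v) * hC (aC * u + bC * v)" for u v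
  have E': "hA u * F u v * hD v = 1" for u v using E[of u v] by (simp only: F_def mult.assoc)
  have D': "aB * bC - aC * bB \<noteq> 0" using D by simp
  define d where "d = inverse (aB * bC - aC * bB)"
  define u where "u = bC * s * d"
  define v where "v = - (aC * s * d)"
  define k where "k = x * inverse aB"
  define m where "m = y * inverse bB"
  have "aB * u + bB * v = s * ((aB * bC - aC * bB) * d)" by (simp add: u_def v_def algebra_simps)
  then have huv: "aB * u + bB * v = s" using D' by (simp add: d_def)
  have hz: "aC * u + bC * v = 0" by (simp add: u_def v_def algebra_simps)
  have hk: "aB * k = x" using aB by (simp add: k_def)
  have hm: "bB * m = y" using bB by (simp add: m_def)
  have e1: "aB * (u + k) + bB * (v + m) = s + x + y" "aB * u + bB * v = s"
    "aB * (u + k) + bB * v = s + x" "aB * u + bB * (v + m) = s + y"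
    by (simp_all only: lin_split huv hk hm add.assoc)
  have e2: "aC * (u + k) + bC * (v + m) = aC * k + bC * m" "aC * u + bC * v = 0"
    "aC * (u + k) + bC * v = aC * k" "aC * u + bC * (v + m) = bC * m"
    by (simp_all only: lin_split hz add_0_left)
  have e3: "aB * (0 + k) + bB * (0 + m) = x + y" "aB * 0 + bB * 0 = 0"
    "aB * (0 + k) + bB * 0 = x" "aB * 0 + bB * (0 + m) = y"
    "aC * (0 + k) + bC * (0 + m) = aC * k + bC * m" "aC * 0 + bC * 0 = 0"
    "aC * (0 + k) + bC * 0 = aC * k" "aC * 0 + bC * (0 + m) = bC * m"
    by (simp_all add: hk hm)
  have P1: "hB (s + x + y) * hC (aC * k + bC * m) * (hB s * hC 0) = hB (s + x) * hC (aC * k) * (hB (s + y) * hC (bC * m))"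
    using four_point[where F=F, OF E' nz1 nz4, of u k v m] unfolding F_def e1 e2 .
  have P0: "hB (x + y) * hC (aC * k + bC * m) * (hB 0 * hC 0) = hB x * hC (aC * k) * (hB y * hC (bC * m))"
    using four_point[where F=F, OF E' nz1 nz4, of 0 k 0 m] unfolding F_def e3 .
  define K where "K = hC (aC * k + bC * m) * hC 0"
  define R where "R = hC (aC * k) * hC (bC * m)"
  have KR: "K * R \<noteq> 0" using nz3 by (simp add: K_def R_def)
  have P1': "(hB (s + x + y) * hB s) * K = (hB (s + x) * hB (s + y)) * R" using P1 by (simp only: K_def R_def mult_ac)
  have P0': "(hB (x + y) * hB 0) * K = (hB x * hB y) * R" using P0 by (simp only: K_def R_def mult_ac)
  have "(hB (s + x + y) * hB s * hB x * hB y) * (K * R) = ((hB (s + x + y) * hB s) * K) * ((hB x * hB y) * R)"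
    by (simp only: mult_ac)
  also have "\<dots> = ((hB (s + x) * hB (s + y)) * R) * ((hB (x + y) * hB 0) * K)" by (simp only: P1' P0')
  also have "\<dots> = (hB (s + x) * hB (s + y) * hB (x + y) * hB 0) * (K * R)" by (simp only: mult_ac)
  finally show ?thesis using KR by simp
qed

lemma case2_H:
  fixes hA hB hC hD :: "'p::prime_card mod_ring \<Rightarrow> complex"
  assumes E: "\<And>u v. hA u * hB (aB * u + bB * v) * hC (aC * u + bC * v) * hD v = 1"
    and nz1: "\<And>u. hA u \<noteq> 0" and nz4: "\<And>v. hD v \<noteq> 0"
    and aB: "aB \<noteq> 0" and bB: "bB \<noteq> 0" and D: "aB * bC = aC * bB"
  defines "H \<equiv> \<lambda>w. hB w * hC (aC * inverse aB * w)"
  shows "H (s + x + y) * H s = H (s + x) * H (s + y)"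
    and "\<And>u v. hA u * H (aB * u + bB * v) * hD v = 1"
proof -
  have l1: "aC * inverse aB * aB = aC" using aB by simp
  have "aC * inverse aB * bB = (aC * bB) * inverse aB" by (simp only: mult_ac)
  also have "\<dots> = (aB * bC) * inverse aB" by (simp only: D)
  also have "\<dots> = bC" using aB by simp
  finally have l2: "aC * inverse aB * bB = bC" .
  have lin: "aC * inverse aB * (aB * u + bB * v) = aC * u + bC * v" for u v
  proof -
    have "aC * inverse aB * (aB * u + bB * v) = (aC * inverse aB * aB) * u + (aC * inverse aB * bB) * v"
      by (simp only: distrib_left mult.assoc)
    then show ?thesis by (simp only: l1 l2)
  qed
  have Hl: "H (aB * u + bB * v) = hB (aB * u + bB * v) * hC (aC * u + bC * v)" for u v
    unfolding H_def by (simp only: lin)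
  show E': "hA u * H (aB * u + bB * v) * hD v = 1" for u v
    using E[of u v] by (simp only: Hl mult.assoc)
  define F where "F u v = H (aB * u + bB * v)" for u v
  have E'': "hA u * F u v * hD v = 1" for u v by (simp only: F_def E')
  define u where "u = s * inverse aB"
  define k where "k = x * inverse aB"
  define m where "m = y * inverse bB"
  have hu: "aB * u = s" using aB by (simp add: u_def)
  have hk: "aB * k = x" using aB by (simp add: k_def)
  have hm: "bB * m = y" using bB by (simp add: m_def)
  have e: "aB * (u + k) + bB * (0 + m) = s + x + y" "aB * u + bB * 0 = s"
    "aB * (u + k) + bB * 0 = s + x" "aB * u + bB * (0 + m) = s + y"
    by (simp_all add: distrib_left hu hk hm add.assoc)
  show "H (s + x + y) * H s = H (s + x) * H (s + y)"
    using four_point[where F=F, OF E'' nz1 nz4, of u k 0 m] unfolding F_def e .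
qed
lemma joint_cf:
  fixes X :: "nat \<Rightarrow> 'a \<Rightarrow> 'p::prime_card mod_ring"
  assumes M: "prob_space M" and ind: "prob_space.indep_vars M (\<lambda>_. count_space UNIV) X {1, 2, 3, 4}"
  shows "(LINT \<omega>|M. zpE ((X 1 \<omega> + a2 * X 2 \<omega> + a3 * X 3 \<omega>) * u + (b2 * X 2 \<omega> + b3 * X 3 \<omega> + X 4 \<omega>) * v))
     = zp_charfun M (X 1) u * zp_charfun M (X 2) (a2 * u + b2 * v) * zp_charfun M (X 3) (a3 * u + b3 * v) * zp_charfun M (X 4) v"
proof -
  interpret prob_space M by (rule M)
  define c where "c i = (if i = 1 then u else if i = 2 then a2 * u + b2 * v else if i = 3 then a3 * u + b3 * v else v)" for i :: nat
  define Z where "Z = (\<lambda>i \<omega>. zpE (X i \<omega> * c i))"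
  have meas: "X i \<in> M \<rightarrow>\<^sub>M count_space UNIV" if "i \<in> {1, 2, 3, 4}" for i
    using ind that unfolding indep_vars_def by auto
  have indZ: "indep_vars (\<lambda>_. borel) Z {1, 2, 3, 4}"
    unfolding Z_def by (rule indep_vars_compose2[OF ind]) (simp add: measurable_count_space_eq1)
  have intZ: "integrable M (Z i)" if "i \<in> {1, 2, 3, 4}" for i
    unfolding Z_def using fin_integrable[OF M meas[OF that], of "\<lambda>x. zpE (x * c i)"] .
  have eqi: "zpE ((X 1 \<omega> + a2 * X 2 \<omega> + a3 * X 3 \<omega>) * u + (b2 * X 2 \<omega> + b3 * X 3 \<omega> + X 4 \<omega>) * v)
     = (\<Prod>i\<in>{1, 2, 3, 4}. Z i \<omega>)" for \<omega>
  proof -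
    have "(X 1 \<omega> + a2 * X 2 \<omega> + a3 * X 3 \<omega>) * u + (b2 * X 2 \<omega> + b3 * X 3 \<omega> + X 4 \<omega>) * v
      = X 1 \<omega> * c 1 + X 2 \<omega> * c 2 + X 3 \<omega> * c 3 + X 4 \<omega> * c 4"
      by (simp add: c_def algebra_simps)
    then show ?thesis by (simp add: Z_def zpE_add mult.assoc)
  qed
  have "(LINT \<omega>|M. zpE ((X 1 \<omega> + a2 * X 2 \<omega> + a3 * X 3 \<omega>) * u + (b2 * X 2 \<omega> + b3 * X 3 \<omega> + X 4 \<omega>) * v))
     = (LINT \<omega>|M. (\<Prod>i\<in>{1, 2, 3, 4}. Z i \<omega>))" by (simp only: eqi)
  also have "\<dots> = (\<Prod>i\<in>{1, 2, 3, 4}. LINT \<omega>|M. Z i \<omega>)"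
    by (rule indep_vars_lebesgue_integral[OF _ indZ intZ]) simp_all
  also have "\<dots> = zp_charfun M (X 1) u * zp_charfun M (X 2) (a2 * u + b2 * v) * zp_charfun M (X 3) (a3 * u + b3 * v) * zp_charfun M (X 4) v"
    by (simp add: Z_def c_def zp_charfun_def zp_pairing_E mult.assoc)
  finally show ?thesis .
qed
lemma hom_from_inv:
  fixes h K :: "'p::prime_card mod_ring \<Rightarrow> complex"
  assumes P: "\<And>u. h u * K u = 1" and K: "\<And>x y. K (x + y) = K x * K y"
  shows "h (x + y) = h x * h y"
proof -
  have hi: "h u = inverse (K u)" for u using inverse_unique[OF P[of u]] by (metis inverse_inverse_eq)
  show ?thesis by (simp add: hi K)
qed

lemma hom_scale:
  fixes \<phi> :: "'p::prime_card mod_ring \<Rightarrow> complex"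
  assumes "\<And>x y. \<phi> (x + y) = \<phi> x * \<phi> y"
  shows "\<phi> (a * (x + y)) = \<phi> (a * x) * \<phi> (a * y)"
  by (simp only: distrib_left assms)

lemma hom_prod2:
  fixes \<phi> \<psi> :: "'p::prime_card mod_ring \<Rightarrow> complex"
  assumes "\<And>x y. \<phi> (x + y) = \<phi> x * \<phi> y" "\<And>x y. \<psi> (x + y) = \<psi> x * \<psi> y"
  shows "\<phi> (a * (x + y)) * \<psi> (b * (x + y)) = (\<phi> (a * x) * \<psi> (b * x)) * (\<phi> (a * y) * \<psi> (b * y))"
  by (simp only: hom_scale[OF assms(1)] hom_scale[OF assms(2)] mult_ac)

lemma meas3:
  fixes f g h :: "'a \<Rightarrow> 'c::finite"
  assumes "f \<in> M \<rightarrow>\<^sub>M count_space UNIV" "g \<in> M \<rightarrow>\<^sub>M count_space UNIV" "h \<in> M \<rightarrow>\<^sub>M count_space UNIV"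
  shows "(\<lambda>\<omega>. G (f \<omega>) (g \<omega>) (h \<omega>)) \<in> M \<rightarrow>\<^sub>M count_space UNIV"
  using meas_fun[OF meas_pair[OF assms(1) meas_pair[OF assms(2,3)]], where G="\<lambda>(a, b, c). G a b c"] by simp

lemma distr_from_char:
  fixes X :: "'a \<Rightarrow> 'p::prime_card mod_ring" and Y :: "'b \<Rightarrow> 'p mod_ring"
  assumes M: "prob_space M" and X: "X \<in> M \<rightarrow>\<^sub>M count_space UNIV"
    and N: "prob_space N" and Y: "Y \<in> N \<rightarrow>\<^sub>M count_space UNIV"
    and nz: "\<And>y. zp_charfun M X y \<noteq> 0"
    and h: "\<And>y. zp_charfun N Y y / zp_charfun M X y = zpE (\<alpha> * y)"
  shows "distr N (count_space UNIV) Y = distr M (count_space UNIV) (\<lambda>\<omega>. X \<omega> + \<alpha>)"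
proof (rule distr_eq_cf[OF _ _ N Y])
  show "prob_space M" by (rule M)
  show "(\<lambda>\<omega>. X \<omega> + \<alpha>) \<in> M \<rightarrow>\<^sub>M count_space UNIV" by (rule meas_fun[OF X])
  fix y
  have "zp_charfun N Y y = zpE (\<alpha> * y) * zp_charfun M X y" using h[of y] nz[of y]
    by (simp add: divide_eq_eq)
  then show "zp_charfun N Y y = zp_charfun M (\<lambda>\<omega>. X \<omega> + \<alpha>) y" by (simp add: cf_shift)
qed

theorem theorem4p1:
  fixes M :: "'a measure" and N :: "'b measure"
    and \<xi> :: "nat \<Rightarrow> 'a \<Rightarrow> 'p::prime_card mod_ring"
    and \<eta> :: "nat \<Rightarrow> 'b \<Rightarrow> 'p mod_ring"
    and a2 a3 b2 b3 :: "'p mod_ring"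
  assumes p_ne_2: "CARD('p) \<noteq> 2"
    and nz: "a2 \<noteq> 0" "a3 \<noteq> 0" "b2 \<noteq> 0" "b3 \<noteq> 0"
    and M: "prob_space M" and N: "prob_space N"
    and indep_xi: "prob_space.indep_vars M (\<lambda>_. count_space UNIV) \<xi> {1, 2, 3, 4}"
    and cf_xi: "\<forall>j\<in>{1, 2, 3, 4}. \<forall>y. zp_charfun M (\<xi> j) y \<noteq> 0"
    and indep_eta: "prob_space.indep_vars N (\<lambda>_. count_space UNIV) \<eta> {1, 2, 3, 4}"
    and cf_eta: "\<forall>j\<in>{1, 2, 3, 4}. \<forall>y. zp_charfun N (\<eta> j) y \<noteq> 0"
    and same_distr:
      "distr N (count_space UNIV)
         (\<lambda>\<omega>. (\<eta> 1 \<omega> + a2 * \<eta> 2 \<omega> + a3 * \<eta> 3 \<omega>, b2 * \<eta> 2 \<omega> + b3 * \<eta> 3 \<omega> + \<eta> 4 \<omega>))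
       = distr M (count_space UNIV)
         (\<lambda>\<omega>. (\<xi> 1 \<omega> + a2 * \<xi> 2 \<omega> + a3 * \<xi> 3 \<omega>, b2 * \<xi> 2 \<omega> + b3 * \<xi> 3 \<omega> + \<xi> 4 \<omega>))"
  shows "(a2 * b3 \<noteq> a3 * b2 \<longrightarrow>
           (\<exists>\<alpha> :: nat \<Rightarrow> 'p mod_ring. \<forall>j\<in>{1, 2, 3, 4}.
              distr N (count_space UNIV) (\<eta> j) = distr M (count_space UNIV) (\<lambda>\<omega>. \<xi> j \<omega> + \<alpha> j)))
       \<and> (a2 * b3 = a3 * b2 \<longrightarrow>
           (\<exists>\<alpha> :: nat \<Rightarrow> 'p mod_ring. \<forall>j\<in>{1, 4}.
              distr N (count_space UNIV) (\<eta> j) = distr M (count_space UNIV) (\<lambda>\<omega>. \<xi> j \<omega> + \<alpha> j)))"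
proof -
  interpret m: prob_space M by (rule M)
  interpret n: prob_space N by (rule N)
  have mx: "\<xi> j \<in> M \<rightarrow>\<^sub>M count_space UNIV" if "j \<in> {1, 2, 3, 4}" for j
    using indep_xi that unfolding m.indep_vars_def by auto
  have me: "\<eta> j \<in> N \<rightarrow>\<^sub>M count_space UNIV" if "j \<in> {1, 2, 3, 4}" for j
    using indep_eta that unfolding n.indep_vars_def by auto
  define f where "f j y = zp_charfun M (\<xi> j) y" for j y
  define g where "g j y = zp_charfun N (\<eta> j) y" for j y
  define h where "h j y = g j y / f j y" for j y
  have fnz: "f j y \<noteq> 0" if "j \<in> {1, 2, 3, 4}" for j y using cf_xi that unfolding f_def by blast
  have gnz: "g j y \<noteq> 0" if "j \<in> {1, 2, 3, 4}" for j y using cf_eta that unfolding g_def by blast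
  have hnz: "h j y \<noteq> 0" if "j \<in> {1, 2, 3, 4}" for j y using fnz[OF that] gnz[OF that] by (simp add: h_def)
  have h0: "h j 0 = 1" for j by (simp add: h_def f_def g_def cf_0[OF M] cf_0[OF N])
  have hsym: "h j (- y) = cnj (h j y)" for j y by (simp add: h_def f_def g_def cf_uminus)
  define Lx where "Lx = (\<lambda>\<omega>. (\<xi> 1 \<omega> + a2 * \<xi> 2 \<omega> + a3 * \<xi> 3 \<omega>, b2 * \<xi> 2 \<omega> + b3 * \<xi> 3 \<omega> + \<xi> 4 \<omega>))"
  define Le where "Le = (\<lambda>\<omega>. (\<eta> 1 \<omega> + a2 * \<eta> 2 \<omega> + a3 * \<eta> 3 \<omega>, b2 * \<eta> 2 \<omega> + b3 * \<eta> 3 \<omega> + \<eta> 4 \<omega>))"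
  have mLx: "Lx \<in> M \<rightarrow>\<^sub>M count_space UNIV"
  proof -
    have "(\<lambda>\<omega>. \<xi> 1 \<omega> + a2 * \<xi> 2 \<omega> + a3 * \<xi> 3 \<omega>) \<in> M \<rightarrow>\<^sub>M count_space UNIV"
      using meas3[OF mx mx mx, of 1 2 3 "\<lambda>a b c. a + a2 * b + a3 * c"] by simp
    moreover have "(\<lambda>\<omega>. b2 * \<xi> 2 \<omega> + b3 * \<xi> 3 \<omega> + \<xi> 4 \<omega>) \<in> M \<rightarrow>\<^sub>M count_space UNIV"
      using meas3[OF mx mx mx, of 2 3 4 "\<lambda>a b c. b2 * a + b3 * b + c"] by simp
    ultimately show ?thesis unfolding Lx_def by (rule meas_pair)
  qed
  have mLe: "Le \<in> N \<rightarrow>\<^sub>M count_space UNIV"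
  proof -
    have "(\<lambda>\<omega>. \<eta> 1 \<omega> + a2 * \<eta> 2 \<omega> + a3 * \<eta> 3 \<omega>) \<in> N \<rightarrow>\<^sub>M count_space UNIV"
      using meas3[OF me me me, of 1 2 3 "\<lambda>a b c. a + a2 * b + a3 * c"] by simp
    moreover have "(\<lambda>\<omega>. b2 * \<eta> 2 \<omega> + b3 * \<eta> 3 \<omega> + \<eta> 4 \<omega>) \<in> N \<rightarrow>\<^sub>M count_space UNIV"
      using meas3[OF me me me, of 2 3 4 "\<lambda>a b c. b2 * a + b3 * b + c"] by simp
    ultimately show ?thesis unfolding Le_def by (rule meas_pair)
  qed
  have key: "g 1 u * g 2 (a2 * u + b2 * v) * g 3 (a3 * u + b3 * v) * g 4 v
           = f 1 u * f 2 (a2 * u + b2 * v) * f 3 (a3 * u + b3 * v) * f 4 v" for u v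
  proof -
    define F where "F = (\<lambda>(a, b). zpE (a * u + b * v))"
    have Fm: "F \<in> borel_measurable (count_space UNIV)" by (simp add: measurable_count_space_eq1)
    have "g 1 u * g 2 (a2 * u + b2 * v) * g 3 (a3 * u + b3 * v) * g 4 v = (LINT \<omega>|N. F (Le \<omega>))"
      unfolding g_def F_def Le_def case_prod_conv by (rule joint_cf[OF N indep_eta, symmetric])
    also have "\<dots> = integral\<^sup>L (distr N (count_space UNIV) Le) F" by (rule integral_distr[OF mLe Fm, symmetric])
    also have "\<dots> = integral\<^sup>L (distr M (count_space UNIV) Lx) F" using same_distr by (simp add: Le_def Lx_def)
    also have "\<dots> = (LINT \<omega>|M. F (Lx \<omega>))" by (rule integral_distr[OF mLx Fm])
    also have "\<dots> = f 1 u * f 2 (a2 * u + b2 * v) * f 3 (a3 * u + b3 * v) * f 4 v"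
      unfolding f_def F_def Lx_def case_prod_conv by (rule joint_cf[OF M indep_xi])
    finally show ?thesis .
  qed
  have HE: "h 1 u * h 2 (a2 * u + b2 * v) * h 3 (a3 * u + b3 * v) * h 4 v = 1" for u v
  proof -
    have "h 1 u * h 2 (a2 * u + b2 * v) * h 3 (a3 * u + b3 * v) * h 4 v
        = (g 1 u * g 2 (a2 * u + b2 * v) * g 3 (a3 * u + b3 * v) * g 4 v)
          / (f 1 u * f 2 (a2 * u + b2 * v) * f 3 (a3 * u + b3 * v) * f 4 v)"
      by (simp add: h_def)
    also have "\<dots> = 1" using key[of u v] fnz by simp
    finally show ?thesis .
  qed
  have nz1: "\<And>u. h 1 u \<noteq> 0" and nz2: "\<And>u. h 2 u \<noteq> 0" and nz3: "\<And>u. h 3 u \<noteq> 0" and nz4: "\<And>u. h 4 u \<noteq> 0"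
    using hnz by auto
  have H1: "h 1 u * (h 2 (a2 * u) * h 3 (a3 * u)) = 1" for u
    using HE[of u 0] h0[of 4] by (simp add: mult.assoc)
  have H4: "h 4 v * (h 2 (b2 * v) * h 3 (b3 * v)) = 1" for v
  proof -
    have "h 1 0 * h 2 (b2 * v) * h 3 (b3 * v) * h 4 v = 1" using HE[of 0 v] by simp
    then show ?thesis by (simp only: h0 mult_1_left mult_ac)
  qed
  have fin: "distr N (count_space UNIV) (\<eta> j) = distr M (count_space UNIV) (\<lambda>\<omega>. \<xi> j \<omega> + \<alpha>)"
    if j: "j \<in> {1, 2, 3, 4}" and ha: "\<And>y. h j y = zpE (\<alpha> * y)" for j \<alpha>
    by (rule distr_from_char[OF M mx[OF j] N me[OF j]]) (use fnz[OF j] ha in \<open>simp_all add: h_def f_def g_def\<close>)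
  have cases1: "\<exists>\<alpha> :: nat \<Rightarrow> 'p mod_ring. \<forall>j\<in>{1, 2, 3, 4}.
              distr N (count_space UNIV) (\<eta> j) = distr M (count_space UNIV) (\<lambda>\<omega>. \<xi> j \<omega> + \<alpha> j)"
    if D: "a2 * b3 \<noteq> a3 * b2"
  proof -
    have E3: "h 1 u * h 3 (a3 * u + b3 * v) * h 2 (a2 * u + b2 * v) * h 4 v = 1" for u v
      using HE[of u v] by (simp only: mult_ac)
    have D': "a3 * b2 \<noteq> a2 * b3" using D by simp
    have hom2: "h 2 (x + y) = h 2 x * h 2 y" for x y
    proof (rule quad_hom[OF p_ne_2 h0 nz2 hsym])
      fix s x
      show "h 2 (s + x + 1) * h 2 s * h 2 x * h 2 1 = h 2 (s + x) * h 2 (s + 1) * h 2 (x + 1)"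
        using case1_h2[where hA="h 1" and hB="h 2" and hC="h 3" and hD="h 4", OF HE nz1 nz3 nz4 nz(1) nz(3) D, of s x 1] h0[of 2]
        by simp
    qed
    have hom3: "h 3 (x + y) = h 3 x * h 3 y" for x y
    proof (rule quad_hom[OF p_ne_2 h0 nz3 hsym])
      fix s x
      show "h 3 (s + x + 1) * h 3 s * h 3 x * h 3 1 = h 3 (s + x) * h 3 (s + 1) * h 3 (x + 1)"
        using case1_h2[where hA="h 1" and hB="h 3" and hC="h 2" and hD="h 4", OF E3 nz1 nz2 nz4 nz(2) nz(4) D', of s x 1] h0[of 3]
        by simp
    qed
    have hom1: "h 1 (x + y) = h 1 x * h 1 y" for x y
      by (rule hom_from_inv[OF H1 hom_prod2[OF hom2 hom3]])
    have hom4: "h 4 (x + y) = h 4 x * h 4 y" for x y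
      by (rule hom_from_inv[OF H4 hom_prod2[OF hom2 hom3]])
    obtain c1 where c1: "\<And>y. h 1 y = zpE (c1 * y)" using hom_to_char[OF hom1 nz1] by blast
    obtain c2 where c2: "\<And>y. h 2 y = zpE (c2 * y)" using hom_to_char[OF hom2 nz2] by blast
    obtain c3 where c3: "\<And>y. h 3 y = zpE (c3 * y)" using hom_to_char[OF hom3 nz3] by blast
    obtain c4 where c4: "\<And>y. h 4 y = zpE (c4 * y)" using hom_to_char[OF hom4 nz4] by blast
    define \<alpha> where "\<alpha> j = (if j = 1 then c1 else if j = 2 then c2 else if j = 3 then c3 else c4)" for j :: nat
    show ?thesis
    proof (intro exI ballI)
      fix j :: nat assume j: "j \<in> {1, 2, 3, 4}"
      have "h j y = zpE (\<alpha> j * y)" for y using j c1 c2 c3 c4 by (auto simp: \<alpha>_def)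
      then show "distr N (count_space UNIV) (\<eta> j) = distr M (count_space UNIV) (\<lambda>\<omega>. \<xi> j \<omega> + \<alpha> j)"
        by (rule fin[OF j])
    qed
  qed
  have cases2: "\<exists>\<alpha> :: nat \<Rightarrow> 'p mod_ring. \<forall>j\<in>{1, 4}.
              distr N (count_space UNIV) (\<eta> j) = distr M (count_space UNIV) (\<lambda>\<omega>. \<xi> j \<omega> + \<alpha> j)"
    if D: "a2 * b3 = a3 * b2"
  proof -
    define H where "H = (\<lambda>w. h 2 w * h 3 (a3 * inverse a2 * w))"
    have Hf: "H (s + x + y) * H s = H (s + x) * H (s + y)" for s x y
      using case2_H(1)[where hA="h 1" and hB="h 2" and hC="h 3" and hD="h 4", OF HE nz1 nz4 nz(1) nz(3) D]
      unfolding H_def .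
    have HE2: "h 1 u * H (a2 * u + b2 * v) * h 4 v = 1" for u v
      using case2_H(2)[where hA="h 1" and hB="h 2" and hC="h 3" and hD="h 4", OF HE nz1 nz4 nz(1) nz(3) D]
      unfolding H_def .
    have H0: "H 0 = 1" using h0 by (simp add: H_def)
    have homH: "H (x + y) = H x * H y" for x y by (rule flat_hom[OF H0 Hf])
    have homHs: "H (a * (x + y)) = H (a * x) * H (a * y)" for a x y by (rule hom_scale[OF homH])
    have P1: "h 1 u * H (a2 * u) = 1" for u using HE2[of u 0] h0[of 4] by simp
    have P4: "h 4 v * H (b2 * v) = 1" for v using HE2[of 0 v] h0[of 1] by (simp add: mult.commute)
    have hom1: "h 1 (x + y) = h 1 x * h 1 y" for x y by (rule hom_from_inv[OF P1 homHs])
    have hom4: "h 4 (x + y) = h 4 x * h 4 y" for x y by (rule hom_from_inv[OF P4 homHs])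
    obtain c1 where c1: "\<And>y. h 1 y = zpE (c1 * y)" using hom_to_char[OF hom1 nz1] by blast
    obtain c4 where c4: "\<And>y. h 4 y = zpE (c4 * y)" using hom_to_char[OF hom4 nz4] by blast
    define \<alpha> where "\<alpha> j = (if j = 1 then c1 else c4)" for j :: nat
    show ?thesis
    proof (intro exI ballI)
      fix j :: nat assume j: "j \<in> {1, 4}"
      then have j': "j \<in> {1, 2, 3, 4}" by auto
      have "h j y = zpE (\<alpha> j * y)" for y using j c1 c4 by (auto simp: \<alpha>_def)
      then show "distr N (count_space UNIV) (\<eta> j) = distr M (count_space UNIV) (\<lambda>\<omega>. \<xi> j \<omega> + \<alpha> j)"
        by (rule fin[OF j'])
    qed
  qed
  show ?thesis using cases1 cases2 by blast
qed

end
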